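(* Every weakly-reversible chemical reaction network that is not catalytic is persistent.
   Context: A chemical reaction network (CRN) consists of positive integers $s,n$, a finite directed graph $G$ with vertex set $\{1,\dots,n\}$ and edge set $E(G)$, and an injective labeling of vertex $i$ by a monic monomial $\psi_i(x)=\prod_{j=1}^s x_j^{y_{ij}}$; let $Y=(y_{ij})$ be the $n\times s$ exponent matrix and $\psi(x)=(\psi_1(x),\dots,\psi_n(x))$. $G$ is weakly-reversible iff each connected component is strongly connected. A mass action system is a CRN with a weight function $k:E(G)\to\mathbb{R}_{>0}$; its dynamics are $\frac{dx}{dt}=\psi(x)\,A_k\,Y$, where $A_k$ is the $n\times n$ matrix with $(i,j)$ entry $k(i,j)$ for $(i,j)\in E(G)$, $i\ne j$, $0$ for other off-diagonal entries, and diagonal chosen so that all row sums are zero. The omega-limit set of $x:\mathbb{R}_{\ge0}\to\mathbb{R}^s$ is the set of $y\in\mathbb{R}^s$ for which there is an increasing sequence $t_m\to\infty$ with $x(t_m)\to y$. The CRN is persistent iff for every $k:E(G)\to\mathbb{R}_{>0}$ and every solution $x:\mathbb{R}_{\ge0}\to\mathbb{R}^s_{>0}$ of the associated dynamics, the omega-limit set of $x$ does not meet the boundary $\partial\mathbb{R}^s_{\ge0}$. The event-graph $\overline{G}$ has as vertices all monic monomials in $x_1,\dots,x_s$, with an edge $(N\psi_i,N\psi_j)$ for each $(i,j)\in E(G)$ and each monic monomial $N$. A weakly-reversible CRN is catalytic iff there exist monic monomials $M,N$ path-connected in $\overline{G}$ such that $M/\gcd(M,N)$ and $N/\gcd(M,N)$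 are not path-connected in $\overline{G}$. *)

theory Defs
  imports "HOL-Analysis.Analysis"
begin

text \<open>Species are indexed by a finite type 's (so s = CARD('s) \<ge> 1), the state space
  R^s is real^'s.  A monic monomial in x_1..x_s is represented by its exponent vector
  's \<Rightarrow> nat; Y i is the exponent vector labelling vertex i.\<close>

type_synonym 's monomial = "'s \<Rightarrow> nat"

definition crn :: "nat \<Rightarrow> (nat \<times> nat) set \<Rightarrow> (nat \<Rightarrow> 's::finite monomial) \<Rightarrow> bool" where
  "crn n E Y \<longleftrightarrow> n \<ge> 1 \<and> E \<subseteq> {1..n} \<times> {1..n} \<and> inj_on Y {1..n}"

definition weakly_reversible :: "nat \<Rightarrow> (nat \<times> nat) set \<Rightarrow> bool" where
  "weakly_reversible n E \<longleftrightarrow>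
     (\<forall>u\<in>{1..n}. \<forall>v\<in>{1..n}. (u, v) \<in> (E \<union> E\<inverse>)\<^sup>* \<longrightarrow> (u, v) \<in> E\<^sup>*)"

definition mono_eval :: "'s::finite monomial \<Rightarrow> real ^ 's \<Rightarrow> real" where
  "mono_eval y x = (\<Prod>j\<in>UNIV. (x $ j) ^ (y j))"

definition Ak :: "nat \<Rightarrow> (nat \<times> nat) set \<Rightarrow> (nat \<times> nat \<Rightarrow> real) \<Rightarrow> nat \<Rightarrow> nat \<Rightarrow> real" where
  "Ak n E k i j =
     (if i \<noteq> j then (if (i, j) \<in> E then k (i, j) else 0)
      else - (\<Sum>l\<in>{1..n} - {i}. if (i, l) \<in> E then k (i, l) else 0))"

definition mass_action_field ::
  "nat \<Rightarrow> (nat \<times> nat) set \<Rightarrow> (nat \<Rightarrow> 's::finite monomial) \<Rightarrow> (nat \<times> nat \<Rightarrow> real)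
     \<Rightarrow> real ^ 's \<Rightarrow> real ^ 's" where
  "mass_action_field n E Y k x =
     (\<chi> j. \<Sum>i\<in>{1..n}. \<Sum>l\<in>{1..n}. mono_eval (Y i) x * Ak n E k i l * real (Y l j))"

definition omega_limit :: "(real \<Rightarrow> real ^ 's::finite) \<Rightarrow> (real ^ 's) set" where
  "omega_limit x = {y. \<exists>t :: nat \<Rightarrow> real. strict_mono t \<and> (\<forall>m. t m \<ge> 0) \<and>
       filterlim t at_top sequentially \<and> (\<lambda>m. x (t m)) \<longlonglongrightarrow> y}"

definition pos_orthant :: "(real ^ 's::finite) set" where
  "pos_orthant = {y. \<forall>j. y $ j > 0}"

definition orthant_boundary :: "(real ^ 's::finite) set" where
  "orthant_boundary = frontier {y. \<forall>j. y $ j \<ge> 0}"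

definition persistent :: "nat \<Rightarrow> (nat \<times> nat) set \<Rightarrow> (nat \<Rightarrow> 's::finite monomial) \<Rightarrow> bool" where
  "persistent n E Y \<longleftrightarrow>
     (\<forall>k :: nat \<times> nat \<Rightarrow> real. (\<forall>e\<in>E. k e > 0) \<longrightarrow>
       (\<forall>x :: real \<Rightarrow> real ^ 's.
          ((\<forall>t\<ge>0. x t \<in> pos_orthant) \<and>
           (\<forall>t\<ge>0. (x has_vector_derivative mass_action_field n E Y k (x t)) (at t within {0..})))
          \<longrightarrow> omega_limit x \<inter> orthant_boundary = {}))"

text \<open>Event graph: vertices all monic monomials, edges (N psi_i, N psi_j) (product = sum
  of exponent vectors).\<close>
definition event_edges :: "(nat \<times> nat) set \<Rightarrow> (nat \<Rightarrow> 's monomial) \<Rightarrow> ('s monomial \<times> 's monomial) set" where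
  "event_edges E Y = {((\<lambda>s. N s + Y i s), (\<lambda>s. N s + Y j s)) | N i j. (i, j) \<in> E}"

text \<open>Path-connected in the event graph (directed reachability; for weakly-reversible
  networks this coincides with undirected connectivity).\<close>
definition event_connected :: "(nat \<times> nat) set \<Rightarrow> (nat \<Rightarrow> 's monomial) \<Rightarrow> 's monomial \<Rightarrow> 's monomial \<Rightarrow> bool" where
  "event_connected E Y M N \<longleftrightarrow> (M, N) \<in> (event_edges E Y)\<^sup>*"

definition mono_gcd :: "'s monomial \<Rightarrow> 's monomial \<Rightarrow> 's monomial" where
  "mono_gcd M N = (\<lambda>j. min (M j) (N j))"

definition mono_div :: "'s monomial \<Rightarrow> 's monomial \<Rightarrow> 's monomial" where
  "mono_div M D = (\<lambda>j. M j - D j)"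

definition catalytic :: "(nat \<times> nat) set \<Rightarrow> (nat \<Rightarrow> 's monomial) \<Rightarrow> bool" where
  "catalytic E Y \<longleftrightarrow> (\<exists>M N. event_connected E Y M N \<and>
      \<not> event_connected E Y (mono_div M (mono_gcd M N)) (mono_div N (mono_gcd M N)))"

end

theory Submission
  imports Defs
begin


definition madd :: "'s monomial \<Rightarrow> 's monomial \<Rightarrow> 's monomial" where
  "madd M R = (\<lambda>s. M s + R s)"

lemma ev_translate:
  assumes "(M, N) \<in> (event_edges E Y)\<^sup>*"
  shows "(madd M R, madd N R) \<in> (event_edges E Y)\<^sup>*"
  using assms
proof (induction rule: rtrancl_induct)
  case base then show ?case by simp
next
  case (step N1 N2)
  from step(2) obtain N i j where e: "(i,j) \<in> E" "N1 = (\<lambda>s. N s + Y i s)" "N2 = (\<lambda>s. N s + Y j s)"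
    unfolding event_edges_def by blast
  have "(madd N1 R, madd N2 R) \<in> event_edges E Y"
    unfolding event_edges_def madd_def
    by (rule CollectI, rule exI[of _ "\<lambda>s. N s + R s"], rule exI[of _ i], rule exI[of _ j])
       (use e in \<open>auto simp: fun_eq_iff\<close>)
  with step(3) show ?case by (rule rtrancl_into_rtrancl)
qed

lemma ev_edge: "(i,j) \<in> E \<Longrightarrow> (madd N (Y i), madd N (Y j)) \<in> event_edges E Y"
  unfolding event_edges_def madd_def by blast

lemma ev_path: "(i,j) \<in> E\<^sup>* \<Longrightarrow> (madd N (Y i), madd N (Y j)) \<in> (event_edges E Y)\<^sup>*"
proof (induction rule: rtrancl_induct)
  case base then show ?case by simp
next
  case (step a b) then show ?case using ev_edge[of a b E N Y] by (meson rtrancl.simps)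
qed

lemma ev_sym:
  assumes crn: "crn n E Y" and wr: "weakly_reversible n E"
    and "(M, N) \<in> (event_edges E Y)\<^sup>*"
  shows "(N, M) \<in> (event_edges E Y)\<^sup>*"
  using assms(3)
proof (induction rule: rtrancl_induct)
  case base then show ?case by simp
next
  case (step N1 N2)
  from step(2) obtain R i j where e: "(i,j) \<in> E" "N1 = madd R (Y i)" "N2 = madd R (Y j)"
    unfolding event_edges_def madd_def by blast
  have ij: "i \<in> {1..n}" "j \<in> {1..n}" using e(1) crn unfolding crn_def by auto
  have "(j, i) \<in> (E \<union> E\<inverse>)\<^sup>*" using e(1) by auto
  then have "(j, i) \<in> E\<^sup>*" using wr ij unfolding weakly_reversible_def by blast
  then have "(N2, N1) \<in> (event_edges E Y)\<^sup>*" using e ev_path by metis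
  with step(3) show ?case by (meson rtrancl_trans)
qed

lemma ev_add:
  assumes "(M1, N1) \<in> (event_edges E Y)\<^sup>*" "(M2, N2) \<in> (event_edges E Y)\<^sup>*"
  shows "(madd M1 M2, madd N1 N2) \<in> (event_edges E Y)\<^sup>*"
proof -
  have "(madd M1 M2, madd N1 M2) \<in> (event_edges E Y)\<^sup>*" using ev_translate[OF assms(1)] .
  moreover have "(madd M2 N1, madd N2 N1) \<in> (event_edges E Y)\<^sup>*" using ev_translate[OF assms(2)] .
  moreover have "madd M2 N1 = madd N1 M2" "madd N2 N1 = madd N1 N2" by (auto simp: madd_def fun_eq_iff)
  ultimately show ?thesis by (metis rtrancl_trans)
qed

lemma ev_cancel:
  assumes nc: "\<not> catalytic E Y"
    and "(madd P R, madd Q R) \<in> (event_edges E Y)\<^sup>*"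
    and disj: "\<And>s. P s = 0 \<or> Q s = 0"
  shows "(P, Q) \<in> (event_edges E Y)\<^sup>*"
proof -
  have g: "mono_gcd (madd P R) (madd Q R) = R"
  proof
    fix s show "mono_gcd (madd P R) (madd Q R) s = R s"
      using disj[of s] unfolding mono_gcd_def madd_def by auto
  qed
  have "mono_div (madd P R) R = P" "mono_div (madd Q R) R = Q"
    by (auto simp: mono_div_def madd_def)
  with nc assms(2) g show ?thesis unfolding catalytic_def event_connected_def by metis
qed



definition mdiff :: "'s monomial \<Rightarrow> 's monomial \<Rightarrow> 's \<Rightarrow> int" where
  "mdiff P Q = (\<lambda>j. int (P j) - int (Q j))"

definition DS :: "(nat \<times> nat) set \<Rightarrow> (nat \<Rightarrow> 's monomial) \<Rightarrow> ('s \<Rightarrow> int) set" where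
  "DS E Y = {u. \<exists>P Q. (Q, P) \<in> (event_edges E Y)\<^sup>* \<and> u = mdiff P Q}"

lemma DS_zero: "(\<lambda>j. 0) \<in> DS E Y"
  unfolding DS_def mdiff_def by (rule CollectI, rule exI[of _ "\<lambda>j. 0"], rule exI[of _ "\<lambda>j. 0"]) auto

lemma DS_add: "u \<in> DS E Y \<Longrightarrow> v \<in> DS E Y \<Longrightarrow> (\<lambda>j. u j + v j) \<in> DS E Y"
proof -
  assume "u \<in> DS E Y" "v \<in> DS E Y"
  then obtain P Q P' Q' where "(Q,P) \<in> (event_edges E Y)\<^sup>*" "u = mdiff P Q"
     "(Q',P') \<in> (event_edges E Y)\<^sup>*" "v = mdiff P' Q'" unfolding DS_def by blast
  then show ?thesis unfolding DS_def
    by (intro CollectI exI[of _ "madd P P'"] exI[of _ "madd Q Q'"] conjI ev_add)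
       (auto simp: mdiff_def madd_def fun_eq_iff)
qed

lemma DS_neg: assumes "crn n E Y" "weakly_reversible n E"
  shows "u \<in> DS E Y \<Longrightarrow> (\<lambda>j. - u j) \<in> DS E Y"
proof -
  assume "u \<in> DS E Y"
  then obtain P Q where "(Q,P) \<in> (event_edges E Y)\<^sup>*" "u = mdiff P Q" unfolding DS_def by blast
  then show ?thesis unfolding DS_def using ev_sym[OF assms]
    by (intro CollectI exI[of _ Q] exI[of _ P] conjI) (auto simp: mdiff_def fun_eq_iff)
qed

lemma DS_nat_mult: "u \<in> DS E Y \<Longrightarrow> (\<lambda>j. int c * u j) \<in> DS E Y"
proof (induction c)
  case 0 then show ?case using DS_zero by simp
next
  case (Suc c)
  then have "(\<lambda>j. int c * u j + u j) \<in> DS E Y" using DS_add by blast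
  then show ?case by (simp add: algebra_simps)
qed

lemma DS_int_mult: assumes "crn n E Y" "weakly_reversible n E"
  shows "u \<in> DS E Y \<Longrightarrow> (\<lambda>j. c * u j) \<in> DS E Y"
proof (cases "c \<ge> 0")
  case True
  assume u: "u \<in> DS E Y"
  then show ?thesis using DS_nat_mult[OF u, of "nat c"] True by simp
next
  case False
  assume u: "u \<in> DS E Y"
  have "(\<lambda>j. - (int (nat (-c)) * u j)) \<in> DS E Y"
    using DS_neg[OF assms DS_nat_mult[OF u, of "nat (-c)"]] .
  then show ?thesis using False by simp
qed

lemma DS_sum: assumes "crn n E Y" "weakly_reversible n E" "finite S"
  shows "(\<And>v. v \<in> S \<Longrightarrow> g v \<in> DS E Y) \<Longrightarrow> (\<lambda>j. \<Sum>v\<in>S. c v * g v j) \<in> DS E Y"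
  using assms(3)
proof (induction S rule: finite_induct)
  case empty then show ?case using DS_zero by simp
next
  case (insert x F)
  have "(\<lambda>j. c x * g x j + (\<Sum>v\<in>F. c v * g v j)) \<in> DS E Y"
  proof (rule DS_add)
    show "(\<lambda>j. c x * g x j) \<in> DS E Y" using DS_int_mult[OF assms(1,2)] insert by auto
    show "(\<lambda>j. \<Sum>v\<in>F. c v * g v j) \<in> DS E Y" using insert by auto
  qed
  then show ?case using insert by simp
qed

lemma DS_edge: "(i,l) \<in> E \<Longrightarrow> mdiff (Y l) (Y i) \<in> DS E Y"
proof -
  assume "(i,l) \<in> E"
  then have "(madd (\<lambda>_. 0) (Y i), madd (\<lambda>_. 0) (Y l)) \<in> event_edges E Y" by (rule ev_edge)
  moreover have "madd (\<lambda>_. 0) (Y i) = Y i" "madd (\<lambda>_. 0) (Y l) = Y l" by (auto simp: madd_def)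
  ultimately show ?thesis unfolding DS_def by auto
qed

lemma siphon_path:
  assumes sip: "\<forall>(i,l)\<in>E. (\<exists>j\<in>Z. Y l j > 0) \<longrightarrow> (\<exists>j\<in>Z. Y i j > 0)"
    and "(M, N) \<in> (event_edges E Y)\<^sup>*" and "\<forall>j\<in>Z. M j = 0"
  shows "\<forall>j\<in>Z. N j = 0"
  using assms(2,3)
proof (induction rule: rtrancl_induct)
  case base then show ?case by simp
next
  case (step N1 N2)
  from step(2) obtain R i l where e: "(i,l) \<in> E" "N1 = madd R (Y i)" "N2 = madd R (Y l)"
    unfolding event_edges_def madd_def by blast
  have z1: "\<forall>j\<in>Z. N1 j = 0" using step by blast
  then have "\<forall>j\<in>Z. Y i j = 0" "\<forall>j\<in>Z. R j = 0" using e by (auto simp: madd_def)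
  then have "\<forall>j\<in>Z. Y l j = 0" using sip e(1) by fastforce
  then show ?case using e \<open>\<forall>j\<in>Z. R j = 0\<close> by (auto simp: madd_def)
qed



definition dv :: "(nat \<Rightarrow> 's::finite monomial) \<Rightarrow> nat \<times> nat \<Rightarrow> real ^ 's" where
  "dv Y e = (\<chi> j. real (Y (snd e) j) - real (Y (fst e) j))"

lemma C1_props:
  fixes Z :: "'s::finite set"
  defines "C1 \<equiv> {w :: real^'s. (\<forall>j. 0 \<le> w$j) \<and> (\<forall>j. j \<in> Z \<or> w$j = 0) \<and> (\<Sum>j\<in>UNIV. w$j) = 1}"
  shows "convex C1" "compact C1"
proof -
  show "convex C1"
    unfolding C1_def
  proof (rule convexI)
    fix x y :: "real^'s" and u v :: real
    assume x: "x \<in> {w. (\<forall>j. 0 \<le> w$j) \<and> (\<forall>j. j \<in> Z \<or> w$j = 0) \<and> (\<Sum>j\<in>UNIV. w$j) = 1}"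
      and y: "y \<in> {w. (\<forall>j. 0 \<le> w$j) \<and> (\<forall>j. j \<in> Z \<or> w$j = 0) \<and> (\<Sum>j\<in>UNIV. w$j) = 1}"
      and uv: "0 \<le> u" "0 \<le> v" "u + v = 1"
    have s: "(\<Sum>j\<in>UNIV. (u *\<^sub>R x + v *\<^sub>R y)$j) = u * (\<Sum>j\<in>UNIV. x$j) + v * (\<Sum>j\<in>UNIV. y$j)"
      by (simp add: sum.distrib sum_distrib_left)
    show "u *\<^sub>R x + v *\<^sub>R y \<in> {w. (\<forall>j. 0 \<le> w$j) \<and> (\<forall>j. j \<in> Z \<or> w$j = 0) \<and> (\<Sum>j\<in>UNIV. w$j) = 1}"
      using x y uv s by (auto simp: mult_nonneg_nonneg) (metis mult_zero_right add_0)
  qed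
  have cl: "closed C1"
    unfolding C1_def
  proof (intro closed_Collect_conj closed_Collect_all)
    show "closed {w::real^'s. 0 \<le> w$j}" for j
      by (intro closed_Collect_le continuous_intros)
    show "closed {w::real^'s. j \<in> Z \<or> w$j = 0}" for j
      by (cases "j \<in> Z") (auto intro!: closed_Collect_eq continuous_intros)
    show "closed {w::real^'s. (\<Sum>j\<in>UNIV. w$j) = 1}"
      by (intro closed_Collect_eq continuous_intros)
  qed
  have bd: "bounded C1"
    unfolding bounded_iff
  proof (intro exI ballI)
    fix w assume w: "w \<in> C1"
    have "norm w \<le> (\<Sum>i\<in>UNIV. \<bar>w$i\<bar>)" by (rule norm_le_l1_cart)
    also have "\<dots> = (\<Sum>i\<in>UNIV. w$i)" using w unfolding C1_def by auto
    also have "\<dots> = 1" using w unfolding C1_def by auto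
    finally show "norm w \<le> 1" .
  qed
  show "compact C1" using cl bd compact_eq_bounded_closed by blast
qed

lemma conservation_exists:
  fixes Y :: "nat \<Rightarrow> 's::finite monomial" and Z :: "'s set"
  assumes crn: "crn n E Y" and wr: "weakly_reversible n E" and nc: "\<not> catalytic E Y"
    and Zne: "Z \<noteq> {}"
    and sip: "\<forall>(i,l)\<in>E. (\<exists>j\<in>Z. Y l j > 0) \<longrightarrow> (\<exists>j\<in>Z. Y i j > 0)"
  shows "\<exists>w::real^'s. (\<forall>j. 0 \<le> w$j) \<and> (\<forall>j. j \<in> Z \<or> w$j = 0) \<and> (\<exists>j. w$j > 0) \<and>
            (\<forall>e\<in>E. dv Y e \<bullet> w = 0)"
proof (rule ccontr)
  assume nex: "\<not> ?thesis"
  define S where "S = dv Y ` E"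
  have finE: "finite E" using crn unfolding crn_def by (meson finite_SigmaI finite_atLeastAtMost finite_subset)
  then have finS: "finite S" unfolding S_def by simp
  define C1 :: "(real^'s) set" where
    "C1 = {w :: real^'s. (\<forall>j. 0 \<le> w$j) \<and> (\<forall>j. j \<in> Z \<or> w$j = 0) \<and> (\<Sum>j\<in>UNIV. w$j) = 1}"
  define C2 :: "(real^'s) set" where "C2 = (\<Inter>v\<in>S. {w. v \<bullet> w = 0})"
  have ax: "axis j 1 \<in> C1" if "j \<in> Z" for j
    using that unfolding C1_def by (auto simp: axis_def)
  have C1ne: "C1 \<noteq> {}" using ax Zne by blast
  have cc: "convex C1" "compact C1" using C1_props[of Z] unfolding C1_def by auto
  have c2: "convex C2" "closed C2" unfolding C2_def
    by (auto intro!: convex_INT closed_INT convex_hyperplane closed_hyperplane)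
  have disj: "C1 \<inter> C2 = {}"
  proof (rule ccontr)
    assume "C1 \<inter> C2 \<noteq> {}"
    then obtain w where w1: "w \<in> C1" and w2: "w \<in> C2" by blast
    have "\<exists>j. w$j > 0"
    proof (rule ccontr)
      assume "\<not> (\<exists>j. w$j > 0)"
      then have "(\<Sum>j\<in>UNIV. w$j) \<le> 0" by (meson not_less sum_nonpos)
      then show False using w1 unfolding C1_def by simp
    qed
    moreover have "\<forall>e\<in>E. dv Y e \<bullet> w = 0" using w2 unfolding C2_def S_def by auto
    ultimately show False using nex w1 unfolding C1_def by blast
  qed
  obtain a b where ab1: "\<forall>x\<in>C1. a \<bullet> x < b" and ab2: "\<forall>x\<in>C2. a \<bullet> x > b"
    using separating_hyperplane_compact_closed[OF cc C1ne c2 disj] by blast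
  have "0 \<in> C2" unfolding C2_def by auto
  then have bneg: "b < 0" using ab2 by force
  have aperp: "a \<bullet> q = 0" if q: "q \<in> C2" for q
  proof (rule ccontr)
    assume nz: "a \<bullet> q \<noteq> 0"
    define t where "t = (b - 1) / (a \<bullet> q)"
    have "t *\<^sub>R q \<in> C2" using q unfolding C2_def by auto
    moreover have "a \<bullet> (t *\<^sub>R q) = b - 1" using nz unfolding t_def by simp
    ultimately show False using ab2 by force
  qed
  define a' where "a' = - a"
  have apos: "a' $ j > 0" if "j \<in> Z" for j
  proof -
    have "a \<bullet> axis j 1 < b" using ab1 ax[OF that] by blast
    then show ?thesis using bneg unfolding a'_def by (simp add: inner_axis)
  qed
  obtain p r where p: "p \<in> span S" and r: "\<And>w. w \<in> span S \<Longrightarrow> orthogonal r w" and apr: "a' = p + r"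
    using orthogonal_subspace_decomp_exists[of S a'] by blast
  have rC2: "r \<in> C2" unfolding C2_def
    using r span_base by (fastforce simp: orthogonal_def inner_commute)
  have "a' \<bullet> r = 0" using aperp[OF rC2] unfolding a'_def by simp
  moreover have "p \<bullet> r = 0" using r[OF p] by (simp add: orthogonal_def inner_commute)
  ultimately have "r \<bullet> r = 0" using apr by (simp add: inner_add_left)
  then have "r = 0" by simp
  then have "a' \<in> span S" using p apr by simp
  then obtain u where au: "a' = (\<Sum>v\<in>S. u v *\<^sub>R v)"
    using span_finite[OF finS] by auto
  have acomp: "a' $ j = (\<Sum>v\<in>S. u v * v $ j)" for j using au by simp
  define B where "B j = (\<Sum>v\<in>S. \<bar>v $ j\<bar>)" for j
  obtain m :: nat where m: "(\<Sum>j\<in>Z. B j / a' $ j) < real m" using reals_Archimedean2 by blast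
  have mj: "B j < real m * a' $ j" if "j \<in> Z" for j
  proof -
    have "B j / a' $ j \<le> (\<Sum>j\<in>Z. B j / a' $ j)"
      by (rule member_le_sum) (use that apos in \<open>auto simp: B_def intro!: divide_nonneg_pos sum_nonneg\<close>)
    then have "B j / a' $ j < real m" using m by linarith
    then show ?thesis using apos[OF that] by (simp add: divide_less_eq mult.commute)
  qed
  define vi :: "real^'s \<Rightarrow> 's \<Rightarrow> int" where "vi v = (\<lambda>j. \<lfloor>v $ j\<rfloor>)" for v
  have viS: "vi v \<in> DS E Y \<and> (\<forall>j. real_of_int (vi v j) = v $ j)" if "v \<in> S" for v
  proof -
    obtain i l where e: "(i,l) \<in> E" "v = dv Y (i,l)" using \<open>v \<in> S\<close> unfolding S_def by auto
    have "vi v = mdiff (Y l) (Y i)" unfolding e vi_def mdiff_def dv_def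
      by (auto simp: fun_eq_iff) (metis floor_of_int of_int_diff of_int_of_nat_eq)
    then show ?thesis using DS_edge[OF e(1)] e(2) by (auto simp: dv_def mdiff_def)
  qed
  define U where "U = (\<lambda>j. \<Sum>v\<in>S. \<lfloor>real m * u v\<rfloor> * vi v j)"
  have UDS: "U \<in> DS E Y" unfolding U_def
    by (rule DS_sum[OF crn wr finS]) (use viS in auto)
  have Upos: "U j > 0" if "j \<in> Z" for j
  proof -
    have "real_of_int (U j) = (\<Sum>v\<in>S. real_of_int \<lfloor>real m * u v\<rfloor> * v $ j)"
      unfolding U_def using viS by simp
    also have "\<dots> = (\<Sum>v\<in>S. real m * u v * v $ j) - (\<Sum>v\<in>S. (real m * u v - real_of_int \<lfloor>real m * u v\<rfloor>) * v $ j)"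
      by (simp add: sum_subtractf[symmetric] algebra_simps)
    also have "(\<Sum>v\<in>S. real m * u v * v $ j) = real m * a' $ j"
      by (simp add: acomp sum_distrib_left mult.assoc)
    finally have eqU: "real_of_int (U j) = real m * a' $ j - (\<Sum>v\<in>S. (real m * u v - real_of_int \<lfloor>real m * u v\<rfloor>) * v $ j)" .
    have "(\<Sum>v\<in>S. (real m * u v - real_of_int \<lfloor>real m * u v\<rfloor>) * v $ j) \<le> B j"
      unfolding B_def
    proof (rule sum_mono)
      fix v assume "v \<in> S"
      define f where "f = real m * u v - real_of_int \<lfloor>real m * u v\<rfloor>"
      have f: "0 \<le> f" "f \<le> 1" unfolding f_def by linarith+
      have "f * v $ j \<le> \<bar>f * v $ j\<bar>" by simp
      also have "\<dots> = f * \<bar>v $ j\<bar>" using f by (simp add: abs_mult)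
      also have "\<dots> \<le> \<bar>v $ j\<bar>" using f by (simp add: mult_left_le_one_le)
      finally show "(real m * u v - real_of_int \<lfloor>real m * u v\<rfloor>) * v $ j \<le> \<bar>v $ j\<bar>"
        unfolding f_def .
    qed
    then have "real_of_int (U j) \<ge> real m * a' $ j - B j" using eqU by linarith
    then show ?thesis using mj[OF that] by linarith
  qed
  obtain P Q where PQ: "(Q, P) \<in> (event_edges E Y)\<^sup>*" "U = mdiff P Q" using UDS unfolding DS_def by blast
  define P0 where "P0 = (\<lambda>j. nat (U j))"
  define Q0 where "Q0 = (\<lambda>j. nat (- U j))"
  have "(madd Q Q0, madd P Q0) \<in> (event_edges E Y)\<^sup>*" using ev_translate[OF PQ(1)] .
  moreover have "madd Q Q0 = madd Q0 Q" "madd P Q0 = madd P0 Q"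
    using PQ(2) unfolding madd_def P0_def Q0_def mdiff_def fun_eq_iff
    by auto
  ultimately have "(madd Q0 Q, madd P0 Q) \<in> (event_edges E Y)\<^sup>*" by simp
  then have QP0: "(Q0, P0) \<in> (event_edges E Y)\<^sup>*"
    by (rule ev_cancel[OF nc]) (auto simp: P0_def Q0_def)
  have "\<forall>j\<in>Z. Q0 j = 0" using Upos unfolding Q0_def by (auto simp: less_imp_le)
  then have "\<forall>j\<in>Z. P0 j = 0" using siphon_path[OF sip QP0] by blast
  moreover obtain j0 where "j0 \<in> Z" using Zne by blast
  ultimately show False using Upos[of j0] unfolding P0_def by auto
qed



lemma stay_in_ball:
  fixes x :: "real \<Rightarrow> real^'s::finite" and F :: "real^'s \<Rightarrow> real^'s"
  assumes der: "\<And>t. t \<in> {a..b} \<Longrightarrow> (x has_vector_derivative F (x t)) (at t within {a..b})"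
    and K: "\<And>z. z \<in> cball y r \<Longrightarrow> norm (F z) \<le> K"
    and Kpos: "K > 0" and ab: "a \<le> b" and small: "K * (b - a) \<le> r / 4"
    and xb: "dist (x b) y < r / 2"
  shows "\<forall>t\<in>{a..b}. x t \<in> cball y r"
proof (rule ccontr)
  assume neg: "\<not> ?thesis"
  define T where "T = {a..b} \<inter> (\<lambda>t. dist (x t) y) -` {r..}"
  have cont: "continuous_on {a..b} x"
    unfolding continuous_on_eq_continuous_within
    using der has_vector_derivative_continuous by blast
  have "T \<noteq> {}" using neg unfolding T_def by (auto simp: dist_commute)
  moreover have "closed T" unfolding T_def
    by (rule continuous_closed_preimage) (auto intro!: continuous_intros cont)
  moreover have "bounded T" unfolding T_def by (rule bounded_subset[of "{a..b}"]) auto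
  ultimately obtain t0 where t0: "t0 \<in> T" and t0max: "\<And>t. t \<in> T \<Longrightarrow> t \<le> t0"
    using compact_attains_sup[of T] compact_eq_bounded_closed by blast
  have t0ab: "a \<le> t0" "t0 \<le> b" and t0d: "dist (x t0) y \<ge> r" using t0 unfolding T_def by auto
  have rpos: "r > 0" using xb by (metis zero_le_dist le_less_trans half_gt_zero_iff)
  have "t0 \<noteq> b" using t0d xb rpos by auto
  then have t0b: "t0 < b" using t0ab by simp
  have inner: "norm (x s - x b) \<le> r / 4" if s: "s \<in> {t0<..b}" for s
  proof -
    have sin: "\<forall>t\<in>{s..b}. dist (x t) y < r"
    proof
      fix t assume t: "t \<in> {s..b}"
      then have "t \<notin> T" using t0max s by force
      then show "dist (x t) y < r" using t s t0ab unfolding T_def by auto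
    qed
    have "norm (x s - x b) \<le> K * norm (s - b)"
    proof (rule differentiable_bound[where f' = "\<lambda>t h. h *\<^sub>R F (x t)" and S = "{s..b}"])
      show "convex {s..b}" by simp
      fix t assume t: "t \<in> {s..b}"
      have "(x has_vector_derivative F (x t)) (at t within {a..b})" using t s t0ab by (intro der) auto
      then have "(x has_vector_derivative F (x t)) (at t within {s..b})"
        by (rule has_vector_derivative_within_subset) (use s t0ab in auto)
      then show "(x has_derivative (\<lambda>h. h *\<^sub>R F (x t))) (at t within {s..b})"
        by (simp add: has_vector_derivative_def)
      have "onorm (\<lambda>h::real. h *\<^sub>R F (x t)) = norm (F (x t))"
        using onorm_scaleR_left[OF bounded_linear_ident, of "F (x t)"] by (simp add: onorm_id)
      also have "\<dots> \<le> K" using K sin t by (auto simp: dist_commute less_imp_le)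
      finally show "onorm (\<lambda>h::real. h *\<^sub>R F (x t)) \<le> K" .
    qed (use s in auto)
    also have "\<dots> \<le> K * (b - a)" using s t0ab Kpos by (auto intro!: mult_left_mono)
    finally show ?thesis using small by linarith
  qed
  have "norm (x t0 - x b) \<le> r / 4"
  proof (rule continuous_on_closure_norm_le[of "{t0<..b}" "\<lambda>s. x s - x b"])
    show "continuous_on (closure {t0<..b}) (\<lambda>s. x s - x b)"
      using t0b t0ab by (auto intro!: continuous_intros continuous_on_subset[OF cont])
    show "\<forall>s\<in>{t0<..b}. norm (x s - x b) \<le> r / 4" using inner by blast
    show "t0 \<in> closure {t0<..b}" using t0b by simp
  qed
  moreover have "dist (x t0) y \<le> dist (x t0) (x b) + dist (x b) y" by (rule dist_triangle)
  ultimately have "dist (x t0) y < r" using xb rpos by (simp add: dist_norm)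
  then show False using t0d by simp
qed

lemma escape:
  fixes x :: "real \<Rightarrow> real^'s::finite" and F :: "real^'s \<Rightarrow> real^'s" and tt :: "nat \<Rightarrow> real"
  assumes cont: "continuous_on UNIV F"
    and der: "\<forall>t\<ge>0. (x has_vector_derivative F (x t)) (at t within {0..})"
    and pos: "\<forall>t\<ge>0. x t $ j0 > 0"
    and lim: "(\<lambda>m. x (tt m)) \<longlonglongrightarrow> y" and tlim: "filterlim tt at_top sequentially"
    and y0: "y $ j0 = 0"
    and Fpos: "F y $ j0 > 0"
  shows False
proof -
  define c where "c = F y $ j0 / 2"
  have cpos: "c > 0" using Fpos unfolding c_def by simp
  obtain d where d: "d > 0" "\<And>z. dist z y < d \<Longrightarrow> dist (F z) (F y) < c"
    using cont cpos unfolding continuous_on_iff by (metis UNIV_I)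
  define r where "r = d / 2"
  have rpos: "r > 0" using d unfolding r_def by simp
  have Fc: "F z $ j0 \<ge> c" if "z \<in> cball y r" for z
  proof -
    have "dist z y < d" using that d rpos unfolding r_def by (auto simp: dist_commute)
    then have "dist (F z) (F y) < c" by (rule d)
    then have "\<bar>F z $ j0 - F y $ j0\<bar> < c"
      using dist_vec_nth_le[of "F z" j0 "F y"] by (simp add: dist_real_def)
    then show ?thesis unfolding c_def by linarith
  qed
  have "compact (F ` cball y r)"
    by (rule compact_continuous_image) (use cont in \<open>auto intro: continuous_on_subset\<close>)
  then obtain K where K: "K > 0" "\<And>z. z \<in> cball y r \<Longrightarrow> norm (F z) \<le> K"
    using compact_imp_bounded bounded_pos by (metis imageI)
  define \<tau> where "\<tau> = r / (4 * K)"
  have taupos: "\<tau> > 0" using rpos K unfolding \<tau>_def by simp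
  have Ktau: "K * \<tau> = r / 4" using K unfolding \<tau>_def by simp
  have ev1: "eventually (\<lambda>m. dist (x (tt m)) y < r / 2) sequentially"
    using lim rpos unfolding tendsto_iff by (meson half_gt_zero_iff)
  have "(\<lambda>m. x (tt m) $ j0) \<longlonglongrightarrow> 0" using tendsto_vec_nth[OF lim, of j0] y0 by simp
  then have ev2: "eventually (\<lambda>m. x (tt m) $ j0 < c * \<tau>) sequentially"
    using cpos taupos by (simp add: order_tendsto_iff)
  have ev3: "eventually (\<lambda>m. tt m \<ge> \<tau>) sequentially"
    using tlim by (simp add: filterlim_at_top)
  obtain m where m1: "dist (x (tt m)) y < r / 2" and m2: "x (tt m) $ j0 < c * \<tau>" and m3: "tt m \<ge> \<tau>"
    using eventually_happens'[OF _ eventually_conj[OF ev1 eventually_conj[OF ev2 ev3]]] by auto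
  define b where "b = tt m"
  define a where "a = b - \<tau>"
  have a0: "a \<ge> 0" using m3 unfolding a_def b_def by simp
  have ab: "a \<le> b" using taupos unfolding a_def by simp
  have derab: "(x has_vector_derivative F (x t)) (at t within {a..b})" if "t \<in> {a..b}" for t
  proof (rule has_vector_derivative_within_subset)
    show "(x has_vector_derivative F (x t)) (at t within {0..})" using der that a0 by auto
    show "{a..b} \<subseteq> {0..}" using a0 by auto
  qed
  have stay: "\<forall>t\<in>{a..b}. x t \<in> cball y r"
    by (rule stay_in_ball[OF derab K(2) K(1) ab]) (use Ktau m1 in \<open>auto simp: a_def b_def\<close>)
  have "\<exists>\<xi>\<in>{a..b}. x b $ j0 - x a $ j0 = (b - a) * F (x \<xi>) $ j0"
  proof (rule mvt_very_simple[OF ab, where f' = "\<lambda>t h. h * F (x t) $ j0"])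
    fix t assume "a \<le> t" "t \<le> b"
    then have "(x has_vector_derivative F (x t)) (at t within {a..b})" by (intro derab) auto
    then have "((\<lambda>t. x t $ j0) has_vector_derivative F (x t) $ j0) (at t within {a..b})"
      by (rule bounded_linear.has_vector_derivative[OF bounded_linear_vec_nth])
    then show "((\<lambda>t. x t $ j0) has_derivative (\<lambda>h. h * F (x t) $ j0)) (at t within {a..b})"
      by (simp add: has_vector_derivative_def)
  qed
  then obtain \<xi> where xi: "\<xi> \<in> {a..b}" "x b $ j0 - x a $ j0 = (b - a) * F (x \<xi>) $ j0" by blast
  have "F (x \<xi>) $ j0 \<ge> c" using Fc stay xi(1) by blast
  then have "(b - a) * F (x \<xi>) $ j0 \<ge> \<tau> * c" using taupos unfolding a_def by (simp add: mult_left_mono)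
  then have "x a $ j0 < 0" using xi(2) m2 unfolding b_def by (simp add: mult.commute)
  then show False using pos a0 by force
qed



lemma field_cont: "continuous_on UNIV (mass_action_field n E Y k)"
  unfolding mass_action_field_def mono_eval_def by (intro continuous_intros)

lemma field_cons:
  assumes cons: "\<forall>e\<in>E. dv Y e \<bullet> w = 0"
  shows "w \<bullet> mass_action_field n E Y k z = 0"
proof -
  define c where "c l = (\<Sum>j\<in>UNIV. w $ j * real (Y l j))" for l
  define kk where "kk i l = (if (i, l) \<in> E then k (i, l) else 0)" for i l
  have row: "(\<Sum>l\<in>{1..n}. Ak n E k i l * c l) = 0" if i: "i \<in> {1..n}" for i
  proof -
    have "(\<Sum>l\<in>{1..n}. Ak n E k i l * c l) = Ak n E k i i * c i + (\<Sum>l\<in>{1..n}-{i}. Ak n E k i l * c l)"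
      using i by (simp add: sum.remove)
    also have "\<dots> = (\<Sum>l\<in>{1..n}-{i}. kk i l * (c l - c i))"
      by (simp add: Ak_def kk_def sum_distrib_right sum_subtractf right_diff_distrib)
    also have "\<dots> = 0"
    proof (rule sum.neutral, rule ballI)
      fix l assume "l \<in> {1..n} - {i}"
      show "kk i l * (c l - c i) = 0"
      proof (cases "(i, l) \<in> E")
        case True
        then have "dv Y (i, l) \<bullet> w = 0" using cons by blast
        then have "c l - c i = 0"
          unfolding c_def dv_def inner_vec_def
          by (simp add: sum_subtractf[symmetric] algebra_simps)
        then show ?thesis by simp
      qed (simp add: kk_def)
    qed
    finally show ?thesis .
  qed
  have "w \<bullet> mass_action_field n E Y k z =
      (\<Sum>j\<in>UNIV. \<Sum>i\<in>{1..n}. \<Sum>l\<in>{1..n}. w $ j * (mono_eval (Y i) z * Ak n E k i l * real (Y l j)))"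
    by (simp add: inner_vec_def mass_action_field_def sum_distrib_left)
  also have "\<dots> = (\<Sum>i\<in>{1..n}. \<Sum>j\<in>UNIV. \<Sum>l\<in>{1..n}. w $ j * (mono_eval (Y i) z * Ak n E k i l * real (Y l j)))"
    by (rule sum.swap)
  also have "\<dots> = (\<Sum>i\<in>{1..n}. \<Sum>l\<in>{1..n}. \<Sum>j\<in>UNIV. w $ j * (mono_eval (Y i) z * Ak n E k i l * real (Y l j)))"
    by (rule sum.cong[OF refl], rule sum.swap)
  also have "\<dots> = (\<Sum>i\<in>{1..n}. mono_eval (Y i) z * (\<Sum>l\<in>{1..n}. Ak n E k i l * c l))"
    by (simp add: c_def sum_distrib_left mult_ac)
  also have "\<dots> = 0" using row by simp
  finally show ?thesis .
qed

lemma mono_eval_nonneg: "\<forall>j. 0 \<le> y $ j \<Longrightarrow> 0 \<le> mono_eval v y"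
  unfolding mono_eval_def by (auto intro!: prod_nonneg)

lemma field_pos:
  assumes crn: "crn n E Y" and kpos: "\<forall>e\<in>E. k e > 0" and ynn: "\<forall>j. 0 \<le> y $ j"
    and il: "(i, l) \<in> E" and j0: "y $ j0 = 0" and Ylj0: "Y l j0 > 0"
    and Yi: "\<forall>j. y $ j = 0 \<longrightarrow> Y i j = 0"
  shows "mass_action_field n E Y k y $ j0 > 0"
proof -
  define g where "g i' = (\<Sum>l'\<in>{1..n}. mono_eval (Y i') y * Ak n E k i' l' * real (Y l' j0))" for i'
  have f: "mass_action_field n E Y k y $ j0 = (\<Sum>i'\<in>{1..n}. g i')"
    unfolding mass_action_field_def g_def by simp
  have zero: "mono_eval (Y i') y * real (Y i' j0) = 0" for i'
  proof (cases "Y i' j0 > 0")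
    case True
    have "mono_eval (Y i') y = 0" unfolding mono_eval_def
      by (rule prod_zero) (use True j0 in auto)
    then show ?thesis by simp
  qed simp
  have Ann: "Ak n E k i' l' \<ge> 0" if "l' \<noteq> i'" for i' l'
    using that kpos by (auto simp: Ak_def less_imp_le)
  have gsplit: "g i' = (\<Sum>l'\<in>{1..n}-{i'}. mono_eval (Y i') y * Ak n E k i' l' * real (Y l' j0))"
    if "i' \<in> {1..n}" for i'
  proof -
    have "g i' = mono_eval (Y i') y * Ak n E k i' i' * real (Y i' j0) +
        (\<Sum>l'\<in>{1..n}-{i'}. mono_eval (Y i') y * Ak n E k i' l' * real (Y l' j0))"
      unfolding g_def using that by (simp add: sum.remove)
    moreover have "mono_eval (Y i') y * Ak n E k i' i' * real (Y i' j0) = 0"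
    proof -
      have "mono_eval (Y i') y * Ak n E k i' i' * real (Y i' j0) = Ak n E k i' i' * (mono_eval (Y i') y * real (Y i' j0))"
        by (simp only: mult_ac)
      then show ?thesis using zero[of i'] by simp
    qed
    ultimately show ?thesis by simp
  qed
  have gnn: "g i' \<ge> 0" if "i' \<in> {1..n}" for i'
    unfolding gsplit[OF that]
    by (rule sum_nonneg) (auto intro!: mult_nonneg_nonneg Ann mono_eval_nonneg ynn)
  have ilr: "i \<in> {1..n}" "l \<in> {1..n}" using il crn unfolding crn_def by auto
  have li: "l \<noteq> i" using Yi j0 Ylj0 by auto
  have psi: "mono_eval (Y i) y > 0" unfolding mono_eval_def
  proof (rule prod_pos)
    fix j show "0 < y $ j ^ Y i j"
    proof (cases "y $ j = 0")
      case True then show ?thesis using Yi by simp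
    next
      case False then have "y $ j > 0" using ynn[rule_format, of j] by linarith
      then show ?thesis by (rule zero_less_power)
    qed
  qed
  have "0 < mono_eval (Y i) y * Ak n E k i l * real (Y l j0)"
  proof -
    have "Ak n E k i l = k (i, l)" using il li by (simp add: Ak_def)
    then show ?thesis using psi kpos il Ylj0 by simp
  qed
  also have "\<dots> \<le> g i" unfolding gsplit[OF ilr(1)]
    by (rule member_le_sum) (use ilr li in \<open>auto intro!: mult_nonneg_nonneg Ann mono_eval_nonneg ynn\<close>)
  finally have "g i > 0" .
  then have "0 < (\<Sum>i'\<in>{1..n}. g i')"
    by (intro sum_pos2[OF _ ilr(1)]) (auto intro: gnn)
  then show ?thesis using f by simp
qed



theorem corollary4p2:
  fixes n :: nat and E :: "(nat \<times> nat) set" and Y :: "nat \<Rightarrow> 's::finite monomial"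
  assumes "crn n E Y"
    and "weakly_reversible n E"
    and "\<not> catalytic E Y"
  shows "persistent n E Y"
  unfolding persistent_def
proof (intro allI impI)
  fix k :: "nat \<times> nat \<Rightarrow> real" and x :: "real \<Rightarrow> real ^ 's"
  assume kpos: "\<forall>e\<in>E. 0 < k e"
  assume xa: "(\<forall>t\<ge>0. x t \<in> pos_orthant) \<and>
     (\<forall>t\<ge>0. (x has_vector_derivative mass_action_field n E Y k (x t)) (at t within {0..}))"
  define F where "F = mass_action_field n E Y k"
  have pos: "\<forall>t\<ge>0. \<forall>j. x t $ j > 0" using xa unfolding pos_orthant_def by auto
  have der: "\<forall>t\<ge>0. (x has_vector_derivative F (x t)) (at t within {0..})" using xa unfolding F_def by auto
  show "omega_limit x \<inter> orthant_boundary = {}"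
  proof (rule ccontr)
    assume "omega_limit x \<inter> orthant_boundary \<noteq> {}"
    then obtain y where yo: "y \<in> omega_limit x" and yb: "y \<in> orthant_boundary" by blast
    obtain tt :: "nat \<Rightarrow> real" where tt0: "\<forall>m. tt m \<ge> 0" and tlim: "filterlim tt at_top sequentially"
      and lim: "(\<lambda>m. x (tt m)) \<longlonglongrightarrow> y"
      using yo unfolding omega_limit_def by blast
    have ynn: "\<forall>j. 0 \<le> y $ j"
    proof
      fix j
      have "(\<lambda>m. x (tt m) $ j) \<longlonglongrightarrow> y $ j" using lim by (rule tendsto_vec_nth)
      then show "0 \<le> y $ j"
        by (rule LIMSEQ_le_const) (use pos tt0 in \<open>auto simp: less_imp_le\<close>)
    qed
    define Z where "Z = {j. y $ j = 0}"
    have Zne: "Z \<noteq> {}"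
    proof
      assume "Z = {}"
      then have yp: "\<forall>j. y $ j > 0" using ynn unfolding Z_def by (auto simp: less_le)
      have opn: "open {z :: real^'s. \<forall>j. 0 < z $ j}"
      proof -
        have "{z :: real^'s. \<forall>j. 0 < z $ j} = (\<Inter>j\<in>UNIV. {z. 0 < z $ j})" by auto
        moreover have "open (\<Inter>j\<in>UNIV. {z :: real^'s. 0 < z $ j})"
          by (rule open_INT) (auto intro!: open_Collect_less continuous_intros)
        ultimately show ?thesis by simp
      qed
      have "{z :: real^'s. \<forall>j. 0 < z $ j} \<subseteq> interior {z. \<forall>j. 0 \<le> z $ j}"
        by (rule interior_maximal[OF _ opn]) (auto simp: less_imp_le)
      then have "y \<in> interior {z. \<forall>j. 0 \<le> z $ j}" using yp by blast
      then show False using yb unfolding orthant_boundary_def frontier_def by blast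
    qed
    have sip0: "\<exists>j\<in>Z. Y i j > 0" if il: "(i, l) \<in> E" and h1: "\<exists>j\<in>Z. Y l j > 0" for i l
    proof (rule ccontr)
      assume h2: "\<not> (\<exists>j\<in>Z. Y i j > 0)"
      from h1 obtain j0 where j0: "j0 \<in> Z" "Y l j0 > 0" by blast
      have Yi: "\<forall>j\<in>Z. Y i j = 0" using h2 by auto
      have Fp: "F y $ j0 > 0" unfolding F_def
        by (rule field_pos[OF assms(1) kpos ynn il]) (use j0 Yi in \<open>auto simp: Z_def\<close>)
      have p0: "\<forall>t\<ge>0. x t $ j0 > 0" using pos by auto
      have y0: "y $ j0 = 0" using j0 unfolding Z_def by simp
      have cF: "continuous_on UNIV F" unfolding F_def by (rule field_cont)
      show False by (rule escape[OF cF der p0 lim tlim y0 Fp])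
    qed
    have sip: "\<forall>(i,l)\<in>E. (\<exists>j\<in>Z. Y l j > 0) \<longrightarrow> (\<exists>j\<in>Z. Y i j > 0)"
      using sip0 by fast
    obtain w :: "real^'s" where w0: "\<forall>j. 0 \<le> w$j" and wZ: "\<forall>j. j \<in> Z \<or> w$j = 0"
      and wp: "\<exists>j. w$j > 0" and wc: "\<forall>e\<in>E. dv Y e \<bullet> w = 0"
      using conservation_exists[OF assms Zne sip] by blast
    have const: "w \<bullet> x t = w \<bullet> x 0" if t: "t \<ge> 0" for t
    proof -
      have "\<exists>\<xi>\<in>{0..t}. w \<bullet> x t - w \<bullet> x 0 = (\<lambda>h. h * (w \<bullet> F (x \<xi>))) (t - 0)"
      proof (rule mvt_very_simple[OF t])
        fix s assume s: "0 \<le> s" "s \<le> t"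
        have "(x has_vector_derivative F (x s)) (at s within {0..t})"
          by (rule has_vector_derivative_within_subset[of _ _ _ "{0..}"]) (use der s in auto)
        then have "((\<lambda>s. w \<bullet> x s) has_vector_derivative w \<bullet> F (x s)) (at s within {0..t})"
          by (rule bounded_linear.has_vector_derivative[OF bounded_linear_inner_right])
        then show "((\<lambda>s. w \<bullet> x s) has_derivative (\<lambda>h. h * (w \<bullet> F (x s)))) (at s within {0..t})"
          by (simp add: has_vector_derivative_def)
      qed
      then show ?thesis using field_cons[OF wc] unfolding F_def by simp
    qed
    have "(\<lambda>m. w \<bullet> x (tt m)) \<longlonglongrightarrow> w \<bullet> y" by (rule tendsto_inner[OF tendsto_const lim])
    moreover have "(\<lambda>m. w \<bullet> x (tt m)) = (\<lambda>m. w \<bullet> x 0)"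
    proof (rule ext)
      fix m show "w \<bullet> x (tt m) = w \<bullet> x 0" using tt0 by (intro const) auto
    qed
    ultimately have "(\<lambda>m. w \<bullet> x 0) \<longlonglongrightarrow> w \<bullet> y" by simp
    then have "w \<bullet> x 0 = w \<bullet> y" by (rule LIMSEQ_unique[OF tendsto_const])
    moreover have "w \<bullet> y = 0"
      unfolding inner_vec_def by (rule sum.neutral) (use wZ in \<open>auto simp: Z_def\<close>)
    moreover have "w \<bullet> x 0 > 0"
    proof -
      obtain j where wj: "w $ j > 0" using wp by blast
      have p: "0 < w $ j * x 0 $ j" using wj pos by simp
      have nn: "\<And>i. 0 \<le> w $ i * x 0 $ i" using w0 pos by (simp add: less_imp_le)
      have "0 < (\<Sum>i\<in>UNIV. w $ i * x 0 $ i)"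
        by (rule sum_pos2[where i=j]) (use p nn in auto)
      then show ?thesis unfolding inner_vec_def by simp
    qed
    ultimately show False by simp
  qed
qed


end
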